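(* Let $(\mathcal{G}(u_0,v_0),-\Omega^2\,du\,dv)$ with radial function $r$ and stress-energy components $T_{uu},T_{uv},T_{vv}$ be as described in the context, satisfying assumptions (I)–(VII). Suppose the marginally trapped tube $\mathcal{A}$ is nonempty and that condition (A), namely \[ T_{uv}\,\Omega^{-2} < \frac{1}{4r^2}, \] holds at every point of $\mathcal{A}$. Then each connected component of $\mathcal{A}$ is achronal and contains no ingoing null segments.
   Context: Fix double null coordinates $(u,v)$ on $\mathbb{R}^2$ with Minkowski metric $-du\,dv$, time-oriented so that $u$ and $v$ increase toward the future. For $u_0,v_0>0$ let $K(u_0,v_0)=[0,u_0]\times[v_0,\infty)$, $\mathcal{C}_{in}=[0,u_0]\times\{v_0\}$ and $\mathcal{C}_{out}=\{0\}\times[v_0,\infty)$; causal notions $J^\pm, I^\pm$ refer to $K(u_0,v_0)$ with the (conformal) metric. Let $\mathcal{G}(u_0,v_0)\subset K(u_0,v_0)$ be a globally hyperbolic, relatively open subset containing $\mathcal{C}_{in}\cup\mathcal{C}_{out}$, equipped with the metric $-\Omega^2\,du\,dv$ ($\Omega>0$ smooth), a smooth function $r\ge 0$ (the radial function) with $r>0$ on $\mathcal{C}_{in}\cup\mathcal{C}_{out}$, and smooth functions $T_{uu},T_{uv},T_{vv}$ (the components of the stress-energy tensor of the spherically symmetric spacetime $-\Omega^2du\,dv+r^2g_{S^2}$, with Einstein equations $R_{\alpha\beta}-\frac12Rg_{\alpha\beta}=2T_{\alpha\beta}$) such that $\partial_u(\Omega^{-2}\partial_u r)=-r\Omega^{-2}T_{uu}$,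 $\partial_v(\Omega^{-2}\partial_v r)=-r\Omega^{-2}T_{vv}$, $\partial_u m=2r^2\Omega^{-2}(T_{uv}\partial_u r-T_{uu}\partial_v r)$, $\partial_v m=2r^2\Omega^{-2}(T_{uv}\partial_v r-T_{vv}\partial_u r)$, where $m=\frac r2(1+4\Omega^{-2}\partial_u r\,\partial_v r)$ is the Hawking mass. Define the regular region $\mathcal{R}=\{\partial_v r>0,\partial_u r<0\}$, trapped region $\mathcal{T}=\{\partial_v r<0,\partial_u r<0\}$, and marginally trapped tube $\mathcal{A}=\{\partial_v r=0,\partial_u r<0\}$ (subsets of $\mathcal{G}(u_0,v_0)$). Let $r_+=\sup_{\mathcal{C}_{out}}r$, $m_+=\sup_{\mathcal{C}_{out}}m$. Assumptions: (I) $T_{uu},T_{uv},T_{vv}\ge0$ on $\mathcal{G}(u_0,v_0)$; (II) $J^-(\mathcal{G}(u_0,v_0))\subset\mathcal{G}(u_0,v_0)$; (III) $r\le r_+<\infty$ along $\mathcal{C}_{out}$; (IV) $0\le m\le m_+<\infty$ along $\mathcal{C}_{out}$; (V) $\partial_u r<0$ along $\mathcal{C}_{out}$; (VI) $\partial_v r>0$ along $\mathcal{C}_{out}$; (VII) (extension principle, closures taken in $K(u_0,v_0)$) if $p\in\overline{\mathcal{R}}$ and $q\in\overline{\mathcal{R}}\cap I^-(p)$ with $J^-(p)\cap J^+(q)\setminus\{p\}\subset\mathcal{R}\cup\mathcal{A}$, then $p\in\mathcal{R}\cup\mathcal{A}$. An ingoing null segment is a segment of a line $\{v=\text{const}\}$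 (direction $\partial_u$); outgoing null segments lie on lines $\{u=\text{const}\}$. *)

theory Defs
  imports "HOL-Analysis.Analysis"
begin

definition pu :: "(real \<times> real \<Rightarrow> real) \<Rightarrow> real \<times> real \<Rightarrow> real" where
  "pu f p = (THE d. ((\<lambda>t. f (fst p + t, snd p)) has_real_derivative d) (at 0))"

definition pv :: "(real \<times> real \<Rightarrow> real) \<Rightarrow> real \<times> real \<Rightarrow> real" where
  "pv f p = (THE d. ((\<lambda>t. f (fst p, snd p + t)) has_real_derivative d) (at 0))"

text \<open>Iterated partial derivatives (True = d/du, False = d/dv).\<close>
fun dpart :: "bool list \<Rightarrow> (real \<times> real \<Rightarrow> real) \<Rightarrow> real \<times> real \<Rightarrow> real" where
  "dpart [] f = f"
| "dpart (b # bs) f = (if b then pu else pv) (dpart bs f)"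

text \<open>Smoothness on a (possibly non-open) set S: f is C-infinity on some open
  neighbourhood of S (all iterated partials are differentiable there).\<close>
definition smooth_near :: "(real \<times> real) set \<Rightarrow> (real \<times> real \<Rightarrow> real) \<Rightarrow> bool" where
  "smooth_near S f \<longleftrightarrow> (\<exists>U. open U \<and> S \<subseteq> U \<and> (\<forall>ds. dpart ds f differentiable_on U))"

definition Kreg :: "real \<Rightarrow> real \<Rightarrow> (real \<times> real) set" where
  "Kreg u0 v0 = {p. 0 \<le> fst p \<and> fst p \<le> u0 \<and> v0 \<le> snd p}"

definition Cin :: "real \<Rightarrow> real \<Rightarrow> (real \<times> real) set" where
  "Cin u0 v0 = {p. 0 \<le> fst p \<and> fst p \<le> u0 \<and> snd p = v0}"

definition Cout :: "real \<Rightarrow> real \<Rightarrow> (real \<times> real) set" where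
  "Cout u0 v0 = {p. fst p = 0 \<and> v0 \<le> snd p}"

text \<open>Causal structure of K (conformally Minkowski, K convex): q is in J^+(p) iff
  u and v both do not decrease; q in I^+(p) iff both strictly increase.\<close>
definition causal_le :: "real \<times> real \<Rightarrow> real \<times> real \<Rightarrow> bool" where
  "causal_le p q \<longleftrightarrow> fst p \<le> fst q \<and> snd p \<le> snd q"

definition chron_less :: "real \<times> real \<Rightarrow> real \<times> real \<Rightarrow> bool" where
  "chron_less p q \<longleftrightarrow> fst p < fst q \<and> snd p < snd q"

definition Jplus :: "real \<Rightarrow> real \<Rightarrow> real \<times> real \<Rightarrow> (real \<times> real) set" where
  "Jplus u0 v0 p = {q \<in> Kreg u0 v0. causal_le p q}"

definition Jminus :: "real \<Rightarrow> real \<Rightarrow> real \<times> real \<Rightarrow> (real \<times> real) set" where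
  "Jminus u0 v0 p = {q \<in> Kreg u0 v0. causal_le q p}"

definition Iminus :: "real \<Rightarrow> real \<Rightarrow> real \<times> real \<Rightarrow> (real \<times> real) set" where
  "Iminus u0 v0 p = {q \<in> Kreg u0 v0. chron_less q p}"

definition Jminus_set :: "real \<Rightarrow> real \<Rightarrow> (real \<times> real) set \<Rightarrow> (real \<times> real) set" where
  "Jminus_set u0 v0 S = (\<Union>p\<in>S. Jminus u0 v0 p)"

text \<open>Global hyperbolicity of a subset G of the 2d conformally flat region:
  all causal diamonds J^+(p) \<inter> J^-(q) (p, q in G) lie in G and are compact
  (causality is automatic in the (u,v)-plane).\<close>
definition glob_hyp :: "real \<Rightarrow> real \<Rightarrow> (real \<times> real) set \<Rightarrow> bool" where
  "glob_hyp u0 v0 G \<longleftrightarrow> (\<forall>p\<in>G. \<forall>q\<in>G.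
      Jplus u0 v0 p \<inter> Jminus u0 v0 q \<subseteq> G \<and> compact (Jplus u0 v0 p \<inter> Jminus u0 v0 q))"

definition hawking_mass ::
  "(real \<times> real \<Rightarrow> real) \<Rightarrow> (real \<times> real \<Rightarrow> real) \<Rightarrow> real \<times> real \<Rightarrow> real" where
  "hawking_mass \<Omega> r p = r p / 2 * (1 + 4 * (\<Omega> p)\<^sup>2 powi (-1) * pu r p * pv r p)"

definition regR :: "(real \<times> real) set \<Rightarrow> (real \<times> real \<Rightarrow> real) \<Rightarrow> (real \<times> real) set" where
  "regR G r = {p \<in> G. pv r p > 0 \<and> pu r p < 0}"

definition trapT :: "(real \<times> real) set \<Rightarrow> (real \<times> real \<Rightarrow> real) \<Rightarrow> (real \<times> real) set" where
  "trapT G r = {p \<in> G. pv r p < 0 \<and> pu r p < 0}"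

definition mttA :: "(real \<times> real) set \<Rightarrow> (real \<times> real \<Rightarrow> real) \<Rightarrow> (real \<times> real) set" where
  "mttA G r = {p \<in> G. pv r p = 0 \<and> pu r p < 0}"

definition achronal :: "(real \<times> real) set \<Rightarrow> bool" where
  "achronal S \<longleftrightarrow> (\<forall>p\<in>S. \<forall>q\<in>S. \<not> chron_less p q)"

definition ingoing_segment :: "real \<Rightarrow> real \<Rightarrow> real \<Rightarrow> (real \<times> real) set" where
  "ingoing_segment a b c = {p. a \<le> fst p \<and> fst p \<le> b \<and> snd p = c}"

end

theory Submission
  imports Defs
begin

lemma line_u:
  fixes F :: "real \<times> real \<Rightarrow> real"
  assumes "F differentiable (at (a,b))"
  shows "((\<lambda>t. F (a+t,b)) has_real_derivative pu F (a,b)) (at 0)"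
    and "((\<lambda>s. F (s,b)) has_real_derivative pu F (a,b)) (at a)"
proof -
  obtain F' where F': "(F has_derivative F') (at (a,b))"
    using assms unfolding differentiable_def by blast
  have lin: "linear F'" using F' has_derivative_linear by blast
  define c where "c = F' (1,0)"
  have sc: "(\<lambda>t. F' (t,0)) = (\<lambda>t. c * t)"
  proof
    fix t :: real
    have "(t,0) = t *\<^sub>R ((1::real),(0::real))" by simp
    then show "F' (t,0) = c * t" unfolding c_def using linear_scale[OF lin] by (metis real_scaleR_def mult.commute)
  qed
  have d1: "((\<lambda>t. (a+t,b)) has_derivative (\<lambda>t. (t,0))) (at (0::real))"
    by (auto intro!: derivative_eq_intros)
  have "((\<lambda>t. F (a+t,b)) has_derivative (\<lambda>t. F' (t,0))) (at 0)"
    using has_derivative_compose[OF d1, of F F'] F' by (simp add: o_def)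
  hence D1: "((\<lambda>t. F (a+t,b)) has_real_derivative c) (at 0)"
    unfolding has_field_derivative_def sc .
  have d2: "((\<lambda>s. (s,b)) has_derivative (\<lambda>t. (t,0))) (at a)"
    by (auto intro!: derivative_eq_intros)
  have "((\<lambda>s. F (s,b)) has_derivative (\<lambda>t. F' (t,0))) (at a)"
    using has_derivative_compose[OF d2, of F F'] F' by (simp add: o_def)
  hence D2: "((\<lambda>s. F (s,b)) has_real_derivative c) (at a)"
    unfolding has_field_derivative_def sc .
  have "pu F (a,b) = c"
    unfolding pu_def using D1 DERIV_unique by (simp, blast)
  thus "((\<lambda>t. F (a+t,b)) has_real_derivative pu F (a,b)) (at 0)"
       "((\<lambda>s. F (s,b)) has_real_derivative pu F (a,b)) (at a)" using D1 D2 by simp_all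
qed

lemma line_v:
  fixes F :: "real \<times> real \<Rightarrow> real"
  assumes "F differentiable (at (a,b))"
  shows "((\<lambda>t. F (a,b+t)) has_real_derivative pv F (a,b)) (at 0)"
    and "((\<lambda>s. F (a,s)) has_real_derivative pv F (a,b)) (at b)"
proof -
  obtain F' where F': "(F has_derivative F') (at (a,b))"
    using assms unfolding differentiable_def by blast
  have lin: "linear F'" using F' has_derivative_linear by blast
  define c where "c = F' (0,1)"
  have sc: "(\<lambda>t. F' (0,t)) = (\<lambda>t. c * t)"
  proof
    fix t :: real
    have "(0,t) = t *\<^sub>R ((0::real),(1::real))" by simp
    then show "F' (0,t) = c * t" unfolding c_def using linear_scale[OF lin] by (metis real_scaleR_def mult.commute)
  qed
  have d1: "((\<lambda>t. (a,b+t)) has_derivative (\<lambda>t. (0,t))) (at (0::real))"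
    by (auto intro!: derivative_eq_intros)
  have "((\<lambda>t. F (a,b+t)) has_derivative (\<lambda>t. F' (0,t))) (at 0)"
    using has_derivative_compose[OF d1, of F F'] F' by (simp add: o_def)
  hence D1: "((\<lambda>t. F (a,b+t)) has_real_derivative c) (at 0)"
    unfolding has_field_derivative_def sc .
  have d2: "((\<lambda>s. (a,s)) has_derivative (\<lambda>t. (0,t))) (at b)"
    by (auto intro!: derivative_eq_intros)
  have "((\<lambda>s. F (a,s)) has_derivative (\<lambda>t. F' (0,t))) (at b)"
    using has_derivative_compose[OF d2, of F F'] F' by (simp add: o_def)
  hence D2: "((\<lambda>s. F (a,s)) has_real_derivative c) (at b)"
    unfolding has_field_derivative_def sc .
  have "pv F (a,b) = c"
    unfolding pv_def using D1 DERIV_unique by (simp, blast)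
  thus "((\<lambda>t. F (a,b+t)) has_real_derivative pv F (a,b)) (at 0)"
       "((\<lambda>s. F (a,s)) has_real_derivative pv F (a,b)) (at b)" using D1 D2 by simp_all
qed

lemma pu_eq:
  assumes "((\<lambda>t. F (a+t,b)) has_real_derivative d) (at 0)"
  shows "pu F (a,b) = d"
  unfolding pu_def using assms DERIV_unique by (simp, blast)


theorem proposition3:
  fixes u0 v0 :: real
    and G :: "(real \<times> real) set"
    and \<Omega> r Tuu Tuv Tvv :: "real \<times> real \<Rightarrow> real"
  defines "K \<equiv> Kreg u0 v0"
    and "m \<equiv> hawking_mass \<Omega> r"
    and "R \<equiv> regR G r"
    and "A \<equiv> mttA G r"
  assumes u0: "u0 > 0" and v0: "v0 > 0"
    and G_sub: "G \<subseteq> K"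
    and G_open: "openin (top_of_set K) G"
    and G_gh: "glob_hyp u0 v0 G"
    and G_init: "Cin u0 v0 \<union> Cout u0 v0 \<subseteq> G"
    and smooth: "smooth_near G \<Omega>" "smooth_near G r" "smooth_near G Tuu"
                "smooth_near G Tuv" "smooth_near G Tvv"
    and Omega_pos: "\<forall>p\<in>G. \<Omega> p > 0"
    and r_nonneg: "\<forall>p\<in>G. r p \<ge> 0"
    and r_pos_init: "\<forall>p\<in>Cin u0 v0 \<union> Cout u0 v0. r p > 0"
    and eq_uu: "\<forall>p\<in>G. pu (\<lambda>q. (\<Omega> q)\<^sup>2 powi (-1) * pu r q) p = - r p * (\<Omega> p)\<^sup>2 powi (-1) * Tuu p"
    and eq_vv: "\<forall>p\<in>G. pv (\<lambda>q. (\<Omega> q)\<^sup>2 powi (-1) * pv r q) p = - r p * (\<Omega> p)\<^sup>2 powi (-1) * Tvv p"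
    and eq_mu: "\<forall>p\<in>G. pu m p = 2 * (r p)\<^sup>2 * (\<Omega> p)\<^sup>2 powi (-1) * (Tuv p * pu r p - Tuu p * pv r p)"
    and eq_mv: "\<forall>p\<in>G. pv m p = 2 * (r p)\<^sup>2 * (\<Omega> p)\<^sup>2 powi (-1) * (Tuv p * pv r p - Tvv p * pu r p)"
    and I: "\<forall>p\<in>G. Tuu p \<ge> 0 \<and> Tuv p \<ge> 0 \<and> Tvv p \<ge> 0"
    and II: "Jminus_set u0 v0 G \<subseteq> G"
    and III: "bdd_above (r ` Cout u0 v0)"
    and IV: "\<forall>p\<in>Cout u0 v0. m p \<ge> 0" "bdd_above (m ` Cout u0 v0)"
    and V: "\<forall>p\<in>Cout u0 v0. pu r p < 0"
    and VI: "\<forall>p\<in>Cout u0 v0. pv r p > 0"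
    and VII: "\<And>p q. p \<in> closure R \<inter> K \<Longrightarrow> q \<in> closure R \<inter> K \<inter> Iminus u0 v0 p \<Longrightarrow>
               Jminus u0 v0 p \<inter> Jplus u0 v0 q - {p} \<subseteq> R \<union> A \<Longrightarrow> p \<in> R \<union> A"
    and A_ne: "A \<noteq> {}"
    and cond_A: "\<forall>p\<in>A. Tuv p * (\<Omega> p)\<^sup>2 powi (-1) < 1 / (4 * (r p)\<^sup>2)"
  shows "\<forall>x\<in>A. achronal (connected_component_set A x) \<and>
           (\<forall>a b c. a < b \<longrightarrow> \<not> ingoing_segment a b c \<subseteq> connected_component_set A x)"
  proof -
  obtain Ur where Ur: "open Ur" "G \<subseteq> Ur" "\<And>ds. dpart ds r differentiable_on Ur"
    using smooth(2) unfolding smooth_near_def by blast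
  obtain UO where UO: "open UO" "G \<subseteq> UO" "\<And>ds. dpart ds \<Omega> differentiable_on UO"
    using smooth(1) unfolding smooth_near_def by blast
  have dr: "dpart ds r differentiable (at q)" if "q \<in> G" for ds q
    using Ur that differentiable_on_eq_differentiable_at by blast
  have dO: "\<Omega> differentiable (at q)" if "q \<in> G" for q
    using UO(1,2) UO(3)[of "[]"] that differentiable_on_eq_differentiable_at by fastforce
  have r_d: "r differentiable (at q)" if "q \<in> G" for q using dr[of q "[]"] that by simp
  have ru_d: "pu r differentiable (at q)" if "q \<in> G" for q using dr[of q "[True]"] that by simp
  have rv_d: "pv r differentiable (at q)" if "q \<in> G" for q using dr[of q "[False]"] that by simp
  have ruv_d: "pu (pv r) differentiable (at q)" if "q \<in> G" for q using dr[of q "[True,False]"] that by simp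
  define W where "W = (\<lambda>q. (\<Omega> q)\<^sup>2 powi (-1))"
  have W_pos: "W q > 0" if "q \<in> G" for q
  proof -
    have "\<Omega> q > 0" using Omega_pos that by auto
    thus ?thesis by (simp add: W_def)
  qed
  have W_d: "W differentiable (at q)" if "q \<in> G" for q
    unfolding W_def using dO[OF that] Omega_pos that by (intro derivative_intros) auto
  define \<Phi> where "\<Phi> = (\<lambda>q. W q * pu r q)"
  define \<Psi> where "\<Psi> = (\<lambda>q. W q * pv r q)"
  have Phi_d: "\<Phi> differentiable (at q)" if "q \<in> G" for q
    unfolding \<Phi>_def using W_d[OF that] ru_d[OF that] by (intro derivative_intros)
  have Psi_d: "\<Psi> differentiable (at q)" if "q \<in> G" for q
    unfolding \<Psi>_def using W_d[OF that] rv_d[OF that] by (intro derivative_intros)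
  have eq_uu': "pu \<Phi> q = - r q * W q * Tuu q" if "q \<in> G" for q
    using eq_uu that unfolding \<Phi>_def W_def by simp
  have eq_vv': "pv \<Psi> q = - r q * W q * Tvv q" if "q \<in> G" for q
    using eq_vv that unfolding \<Psi>_def W_def by simp
  have inK: "0 \<le> fst x \<and> fst x \<le> u0 \<and> v0 \<le> snd x" if "x \<in> G" for x
    using G_sub that unfolding K_def Kreg_def by auto
  have inG: "(s, w) \<in> G" if "x \<in> G" "0 \<le> s" "s \<le> fst x" "v0 \<le> w" "w \<le> snd x" for x s w
  proof -
    have "(s,w) \<in> Jminus u0 v0 x" unfolding Jminus_def Kreg_def causal_le_def
      using that inK[OF that(1)] by auto
    thus ?thesis using II that(1) unfolding Jminus_set_def by blast
  qed
  have F1: "pu r x < 0" if "x \<in> G" for x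
  proof -
    obtain a b where x: "x = (a,b)" by (cases x)
    have ab: "0 \<le> a" "a \<le> u0" "v0 \<le> b" using inK[OF that] x by auto
    have "\<Phi> (a,b) \<le> \<Phi> (0,b)"
    proof (rule DERIV_nonpos_imp_nonincreasing[of 0 a "\<lambda>s. \<Phi> (s,b)"])
      show "0 \<le> a" by fact
      fix s assume s: "0 \<le> s" "s \<le> a"
      have sG: "(s,b) \<in> G" using inG[OF that, of s b] s ab x by auto
      have "0 \<le> r (s,b) * W (s,b) * Tuu (s,b)"
        using r_nonneg I W_pos[OF sG] sG by (intro mult_nonneg_nonneg) auto
      then show "\<exists>y. DERIV (\<lambda>s. \<Phi> (s,b)) s :> y \<and> y \<le> 0"
        using line_u(2)[OF Phi_d[OF sG]] eq_uu'[OF sG] by auto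
    qed
    moreover have "(0,b) \<in> Cout u0 v0" using ab unfolding Cout_def by auto
    hence "(0,b) \<in> G" "pu r (0,b) < 0" using G_init V by auto
    hence "\<Phi> (0,b) < 0" using W_pos unfolding \<Phi>_def by (simp add: mult_pos_neg)
    ultimately have "W (a,b) * pu r (a,b) < 0" unfolding \<Phi>_def by simp
    thus ?thesis using W_pos[OF that] x by (simp add: mult_less_0_iff)
  qed
  have F2: "\<Psi> x \<le> \<Psi> (fst x, w)" if "x \<in> G" "v0 \<le> w" "w \<le> snd x" for x w
  proof -
    obtain a b where x: "x = (a,b)" by (cases x)
    have ab: "0 \<le> a" "a \<le> u0" "v0 \<le> b" using inK[OF that(1)] x by auto
    have "\<Psi> (a,b) \<le> \<Psi> (a,w)"
    proof (rule DERIV_nonpos_imp_nonincreasing[of w b "\<lambda>s. \<Psi> (a,s)"])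
      show "w \<le> b" using that x by simp
      fix s assume s: "w \<le> s" "s \<le> b"
      have sG: "(a,s) \<in> G" using inG[OF that(1), of a s] s ab x that by auto
      have "0 \<le> r (a,s) * W (a,s) * Tvv (a,s)"
        using r_nonneg I W_pos[OF sG] sG by (intro mult_nonneg_nonneg) auto
      then show "\<exists>y. DERIV (\<lambda>s. \<Psi> (a,s)) s :> y \<and> y \<le> 0"
        using line_v(2)[OF Psi_d[OF sG]] eq_vv'[OF sG] by auto
    qed
    thus ?thesis using x by simp
  qed
  have AG: "q \<in> G" "pv r q = 0" "pu r q < 0" if "q \<in> A" for q
    using that unfolding A_def mttA_def by auto
  have F3: "pu (pv r) (a,b) < 0" if pA: "(a,b) \<in> A" for a b
  proof -
    note pG = AG(1)[OF pA]
    have rv0: "pv r (a,b) = 0" and ru: "pu r (a,b) < 0" using AG[OF pA] by auto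
    have Wp: "W (a,b) > 0" using W_pos[OF pG] .
    have cA: "Tuv (a,b) * W (a,b) < 1 / (4 * (r (a,b))\<^sup>2)"
      using cond_A pA unfolding W_def by auto
    have rpos: "r (a,b) > 0"
    proof (rule ccontr)
      assume "\<not> r (a,b) > 0"
      hence "r (a,b) = 0" using r_nonneg pG by force
      moreover have "0 \<le> Tuv (a,b) * W (a,b)" using I pG Wp by auto
      ultimately show False using cA by simp
    qed
    have mfun: "(\<lambda>t. m (a+t,b)) = (\<lambda>t. r (a+t,b) / 2 * (1 + 4 * \<Phi> (a+t,b) * pv r (a+t,b)))"
      unfolding m_def hawking_mass_def \<Phi>_def W_def by (simp add: mult.assoc)
    note R1 = line_u(1)[OF r_d[OF pG]]
    note P1 = line_u(1)[OF Phi_d[OF pG]]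
    note V1 = line_u(1)[OF rv_d[OF pG]]
    note E0 = DERIV_mult[OF DERIV_cdivide[OF R1, of 2] DERIV_add[OF DERIV_const[of 1] DERIV_mult[OF DERIV_cmult[OF P1, of 4] V1]]]
    have "((\<lambda>t. m (a+t,b)) has_real_derivative
        (pu r (a,b) / 2 * (1 + 4 * \<Phi> (a,b) * pv r (a,b)) + r (a,b) / 2 * (4 * pu \<Phi> (a,b) * pv r (a,b) + 4 * \<Phi> (a,b) * pu (pv r) (a,b)))) (at 0)"
      unfolding mfun by (rule DERIV_cong[OF E0]) (simp add: algebra_simps)
    hence "pu m (a,b) = pu r (a,b) / 2 * (1 + 4 * \<Phi> (a,b) * pv r (a,b)) + r (a,b) / 2 * (4 * pu \<Phi> (a,b) * pv r (a,b) + 4 * \<Phi> (a,b) * pu (pv r) (a,b))"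
      by (rule pu_eq)
    hence E: "pu r (a,b) / 2 + 2 * r (a,b) * W (a,b) * pu r (a,b) * pu (pv r) (a,b)
        = 2 * (r (a,b))\<^sup>2 * W (a,b) * Tuv (a,b) * pu r (a,b)"
      using eq_mu pG rv0 unfolding \<Phi>_def W_def by (simp add: algebra_simps)
    define X where "X = pu (pv r) (a,b)"
    have E2: "pu r (a,b) * (1/2 + 2 * r (a,b) * W (a,b) * X - 2 * (r (a,b))\<^sup>2 * W (a,b) * Tuv (a,b)) = 0"
      using E unfolding X_def by (simp add: algebra_simps)
    hence E3: "2 * r (a,b) * W (a,b) * X = 2 * (r (a,b))\<^sup>2 * W (a,b) * Tuv (a,b) - 1/2"
      using ru by simp
    have "Tuv (a,b) * W (a,b) * (4 * (r (a,b))\<^sup>2) < 1"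
      using cA rpos by (simp add: less_divide_eq)
    hence "2 * r (a,b) * W (a,b) * X < 0" using E3 by (simp add: algebra_simps)
    hence "X < 0" using rpos Wp
      by (metis less_eq_real_def linorder_not_le mult_nonneg_nonneg zero_le_numeral mult_pos_pos)
    thus ?thesis unfolding X_def .
  qed
  have F4R: "\<exists>d>0. \<forall>t. 0 < t \<and> t < d \<longrightarrow> pv r (a+t,b) < 0" if pA: "(a,b) \<in> A" for a b
  proof -
    have D: "DERIV (\<lambda>s. pv r (s,b)) a :> pu (pv r) (a,b)"
      using line_u(2)[OF rv_d[OF AG(1)[OF pA]]] .
    show ?thesis using DERIV_neg_dec_right[OF D F3[OF pA]] AG(2)[OF pA] by auto
  qed
  have F4L: "\<exists>d>0. \<forall>t. 0 < t \<and> t < d \<longrightarrow> pv r (a-t,b) > 0" if pA: "(a,b) \<in> A" for a b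
  proof -
    have D: "DERIV (\<lambda>s. pv r (s,b)) a :> pu (pv r) (a,b)"
      using line_u(2)[OF rv_d[OF AG(1)[OF pA]]] .
    show ?thesis using DERIV_neg_dec_left[OF D F3[OF pA]] AG(2)[OF pA] by auto
  qed
  have F5: False if xA: "(a,c) \<in> A" and yA: "(b,c) \<in> A" and ab: "a < b" for a b c
  proof -
    let ?h = "\<lambda>s. pv r (s,c)"
    have a0: "0 \<le> a" using inK AG(1)[OF xA] by fastforce
    have segG: "(s,c) \<in> G" if "a \<le> s" "s \<le> b" for s
      using inG[OF AG(1)[OF yA], of s c] that a0 inK[OF AG(1)[OF yA]] by auto
    have zeroA: "(s,c) \<in> A" if "a \<le> s" "s \<le> b" "?h s = 0" for s
      using segG[OF that(1,2)] that(3) F1[OF segG[OF that(1,2)]] unfolding A_def mttA_def by auto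
    have cont: "continuous_on {a..b} ?h"
    proof (rule continuous_at_imp_continuous_on, intro ballI)
      fix s assume "s \<in> {a..b}"
      hence "(s,c) \<in> G" using segG by auto
      thus "isCont ?h s" using line_u(2)[OF rv_d] DERIV_isCont by blast
    qed
    obtain d where d: "d > 0" "\<forall>t. 0 < t \<and> t < d \<longrightarrow> ?h (a+t) < 0" using F4R[OF xA] by blast
    define \<mu> where "\<mu> = min d (b-a)"
    define a' where "a' = a + \<mu> / 2"
    have m1: "\<mu> \<le> b-a" "\<mu> > 0" "\<mu> \<le> d" using d ab unfolding \<mu>_def by auto
    have a'1: "a < a'" using m1 unfolding a'_def by linarith
    have a'2: "a' < b" using m1 unfolding a'_def by linarith
    note a' = a'1 a'2
    have ha': "?h a' < 0" using d(2)[rule_format, of "\<mu> / 2"] m1 unfolding a'_def by auto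
    define Z where "Z = {s \<in> {a'..b}. ?h s = 0}"
    have bZ: "b \<in> Z" using AG(2)[OF yA] a' unfolding Z_def by auto
    have clZ: "closed Z" unfolding Z_def
      by (rule continuous_closed_preimage_constant) (use continuous_on_subset[OF cont] a' in auto)
    have bdZ: "bdd_below Z" unfolding Z_def by (rule bdd_belowI[of _ a']) auto
    define s where "s = Inf Z"
    have sZ: "s \<in> Z" unfolding s_def using closed_contains_Inf[OF _ bdZ clZ] bZ by blast
    have s1: "a' \<le> s" "s \<le> b" "?h s = 0" using sZ unfolding Z_def by auto
    have s2: "a' < s" using s1 ha' by (cases "a' = s") auto
    obtain e where e: "e > 0" "\<forall>t. 0 < t \<and> t < e \<longrightarrow> ?h (s-t) > 0"
      using F4L[OF zeroA[of s]] s1 a' by auto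
    define \<nu> where "\<nu> = min e (s-a')"
    define t where "t = s - \<nu> / 2"
    have m2: "\<nu> \<le> s-a'" "\<nu> > 0" "\<nu> \<le> e" using e s2 unfolding \<nu>_def by auto
    have t1: "a' < t" using m2 unfolding t_def by linarith
    have t2: "t < s" using m2 unfolding t_def by linarith
    note t = t1 t2
    have ht: "?h t > 0" using e(2)[rule_format, of "\<nu> / 2"] m2 unfolding t_def by auto
    obtain z where z: "a' \<le> z" "z \<le> t" "?h z = 0"
      using IVT'[of ?h a' 0 t] ha' ht t continuous_on_subset[OF cont, of "{a'..t}"] a' s1 by auto
    have "z \<in> Z" using z t s1 unfolding Z_def by auto
    hence "s \<le> z" unfolding s_def using bdZ by (rule cInf_lower)
    thus False using z t by auto
  qed
  show ?thesis
  proof (intro ballI conjI allI impI)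
    fix x0 assume x0: "x0 \<in> A"
    define C where "C = connected_component_set A x0"
    have CA: "C \<subseteq> A" unfolding C_def by (rule connected_component_subset)
    have conC: "connected C" unfolding C_def by (rule connected_connected_component)
    show "achronal (connected_component_set A x0)"
      unfolding achronal_def C_def[symmetric]
    proof (intro ballI notI)
      fix p q assume pC: "p \<in> C" and qC: "q \<in> C" and pq: "chron_less p q"
      obtain a b where p: "p = (a,b)" by (cases p)
      have pA: "(a,b) \<in> A" using pC CA p by auto
      obtain d where d: "d > 0" "\<forall>t. 0 < t \<and> t < d \<longrightarrow> pv r (a+t,b) < 0" using F4R[OF pA] by blast
      have claim: False if zA: "z \<in> A" "a < fst z" "fst z < a + d" "b < snd z" for z
      proof -
        have zG: "z \<in> G" using AG(1)[OF zA(1)] .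
        have b0: "v0 \<le> b" using inK AG(1)[OF pA] by fastforce
        have "\<Psi> z \<le> \<Psi> (fst z, b)" using F2[OF zG b0] zA by auto
        moreover have "\<Psi> z = 0" using AG(2)[OF zA(1)] unfolding \<Psi>_def by simp
        moreover have "(fst z, b) \<in> G" using inG[OF zG, of "fst z" b] inK[OF zG] b0 zA by auto
        moreover have "pv r (fst z, b) < 0" using d(2)[rule_format, of "fst z - a"] zA by auto
        moreover have "W (fst z, b) > 0" using W_pos \<open>(fst z, b) \<in> G\<close> by blast
        ultimately show False unfolding \<Psi>_def by (smt (verit) mult_pos_neg)
      qed
      define U1 :: "(real \<times> real) set" where "U1 = ({..<a+d} \<times> UNIV) \<union> (UNIV \<times> {..<b})"
      define U2 :: "(real \<times> real) set" where "U2 = {a<..} \<times> {b<..}"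
      have o1: "open U1" unfolding U1_def by (intro open_Un open_Times) auto
      have o2: "open U2" unfolding U2_def by (intro open_Times) auto
      have dis: "U1 \<inter> U2 \<inter> C = {}"
      proof (rule ccontr)
        assume "U1 \<inter> U2 \<inter> C \<noteq> {}"
        then obtain z where z: "z \<in> U1" "z \<in> U2" "z \<in> C" by blast
        thus False using claim[of z] CA unfolding U1_def U2_def by (cases z) auto
      qed
      have cov: "C \<subseteq> U1 \<union> U2"
      proof
        fix z assume zC: "z \<in> C"
        obtain u v where z: "z = (u,v)" by (cases z)
        show "z \<in> U1 \<union> U2"
        proof (cases "u < a + d \<or> v < b")
          case True thus ?thesis unfolding U1_def z by auto
        next
          case False
          have "v \<noteq> b"
          proof
            assume "v = b"
            thus False using F5[OF pA, of u] zC CA z False d(1) by auto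
          qed
          thus ?thesis using False d(1) unfolding U2_def z by auto
        qed
      qed
      have "U1 \<inter> C = {} \<or> U2 \<inter> C = {}" by (rule connectedD[OF conC o1 o2 dis cov])
      moreover have "p \<in> U1" unfolding U1_def p using d(1) by auto
      moreover have "q \<in> U2" using pq p unfolding U2_def chron_less_def by (cases q) auto
      ultimately show False using pC qC by blast
    qed
  next
    fix x0 and a b c :: real assume x0: "x0 \<in> A" and ab: "a < b"
    show "\<not> ingoing_segment a b c \<subseteq> connected_component_set A x0"
    proof
      assume H: "ingoing_segment a b c \<subseteq> connected_component_set A x0"
      have s1: "(a,c) \<in> ingoing_segment a b c" "(b,c) \<in> ingoing_segment a b c"
        using ab unfolding ingoing_segment_def by auto
      have "(a,c) \<in> A" "(b,c) \<in> A"
        using H connected_component_subset[of A x0] s1 by blast+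
      thus False using F5 ab by blast
    qed
  qed
qed

end
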